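(* Let $m$ be a positive integer and let $\Delta$ be a $(d-1)$-dimensional balanced simplicial complex (coloring $\kappa:V(\Delta)\to[d]$) that is $m$-Buchsbaum* over $\mathbf{k}$. Then for every nonempty proper subset $S\subsetneq[d]$, the rank-selected subcomplex $\Delta_S$ is $m$-Buchsbaum* over $\mathbf{k}$.
   Context: All complexes are finite; homology is reduced with coefficients in a fixed field $\mathbf{k}$. $\mathrm{lk}_\Delta(F)=\{\sigma\in\Delta:\sigma\cap F=\emptyset,\sigma\cup F\in\Delta\}$; for $A\subseteq V(\Delta)$, $\Delta-A$ is the induced subcomplex on $V(\Delta)\setminus A$. A $(d-1)$-dimensional complex is Buchsbaum over $\mathbf{k}$ if it is pure and for every nonempty face $F$, $\widetilde H_j(\mathrm{lk}_\Delta F)=0$ for $j<d-1-|F|$. A $(d-1)$-dimensional Buchsbaum complex $\Delta$ is Buchsbaum* over $\mathbf{k}$ if for every $p\in|\Delta|$ the canonical map $\widetilde H_{d-1}(|\Delta|)\to\widetilde H_{d-1}(|\Delta|,|\Delta|-p)$ is surjective. $\Delta$ is $m$-Buchsbaum* if $\Delta$ is Buchsbaum and $\Delta-A$ is Buchsbaum* of dimension $d-1$ for every $A\subseteq V(\Delta)$ with $|A|<m$. $\Delta$ is balanced if there is $\kappa:V(\Delta)\to[d]$ with $\kappa(u)\ne\kappa(v)$ for every edge $\{u,v\}$; $\Delta_S=\{\tau\in\Delta:\kappa(\tau)\subseteq S\}$. *)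

theory Defs
  imports Main
begin

text \<open>Finite abstract simplicial complexes on a vertex type 'v; faces are finite vertex sets.
  The empty face belongs to every nonempty complex (reduced homology).\<close>

definition simplicial_complex :: "'v set set \<Rightarrow> bool" where
  "simplicial_complex \<Delta> \<longleftrightarrow> finite \<Delta> \<and> (\<forall>\<sigma>\<in>\<Delta>. \<forall>\<tau>. \<tau> \<subseteq> \<sigma> \<longrightarrow> \<tau> \<in> \<Delta>)"

definition vertices :: "'v set set \<Rightarrow> 'v set" where
  "vertices \<Delta> = \<Union>\<Delta>"

text \<open>dim_card = dimension + 1 = maximal face cardinality.\<close>
definition dim_card :: "'v set set \<Rightarrow> nat" where
  "dim_card \<Delta> = Max (card ` \<Delta>)"

definition pure :: "'v set set \<Rightarrow> bool" where
  "pure \<Delta> \<longleftrightarrow> (\<forall>\<sigma>\<in>\<Delta>. \<exists>\<tau>\<in>\<Delta>. \<sigma> \<subseteq> \<tau> \<and> card \<tau> = dim_card \<Delta>)"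

definition link :: "'v set set \<Rightarrow> 'v set \<Rightarrow> 'v set set" where
  "link \<Delta> F = {\<sigma>\<in>\<Delta>. \<sigma> \<inter> F = {} \<and> \<sigma> \<union> F \<in> \<Delta>}"

definition delete_vertices :: "'v set set \<Rightarrow> 'v set \<Rightarrow> 'v set set" where
  "delete_vertices \<Delta> A = {\<sigma>\<in>\<Delta>. \<sigma> \<inter> A = {}}"

definition cost :: "'v set set \<Rightarrow> 'v set \<Rightarrow> 'v set set" where
  "cost \<Delta> F = {\<sigma>\<in>\<Delta>. \<not> F \<subseteq> \<sigma>}"

text \<open>Simplicial chains with coefficients in a field 'k, oriented by the linear order on 'v.
  A chain is a function from faces to 'k; "card index" n corresponds to homological degree n-1
  (n = 0 is the empty face, giving reduced homology).\<close>

definition bd_sign :: "'v::linorder set \<Rightarrow> 'v \<Rightarrow> 'k::field" where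
  "bd_sign \<sigma> v = (-1) ^ card {u\<in>\<sigma>. u < v}"

definition boundary :: "'v::linorder set set \<Rightarrow> ('v set \<Rightarrow> 'k::field) \<Rightarrow> 'v set \<Rightarrow> 'k" where
  "boundary \<Delta> c \<tau> = (\<Sum>v\<in>{v. v \<notin> \<tau> \<and> insert v \<tau> \<in> \<Delta>}. bd_sign (insert v \<tau>) v * c (insert v \<tau>))"

definition chain_on :: "'v set set \<Rightarrow> nat \<Rightarrow> ('v set \<Rightarrow> 'k::zero) \<Rightarrow> bool" where
  "chain_on X n c \<longleftrightarrow> (\<forall>\<sigma>. c \<sigma> \<noteq> 0 \<longrightarrow> \<sigma> \<in> X \<and> card \<sigma> = n)"

definition rel_cycle :: "'k::field itself \<Rightarrow> 'v::linorder set set \<Rightarrow> 'v set set \<Rightarrow> nat \<Rightarrow> ('v set \<Rightarrow> 'k) \<Rightarrow> bool" where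
  "rel_cycle K \<Delta> \<Gamma> n z \<longleftrightarrow> chain_on (\<Delta> - \<Gamma>) n z \<and> (\<forall>\<tau>. \<tau> \<notin> \<Gamma> \<longrightarrow> boundary \<Delta> z \<tau> = 0)"

definition rel_boundary :: "'k::field itself \<Rightarrow> 'v::linorder set set \<Rightarrow> 'v set set \<Rightarrow> nat \<Rightarrow> ('v set \<Rightarrow> 'k) \<Rightarrow> bool" where
  "rel_boundary K \<Delta> \<Gamma> n z \<longleftrightarrow>
     (\<exists>b::'v set \<Rightarrow> 'k. chain_on (\<Delta> - \<Gamma>) (Suc n) b \<and> (\<forall>\<tau>. \<tau> \<notin> \<Gamma> \<longrightarrow> z \<tau> = boundary \<Delta> b \<tau>))"

text \<open>Reduced homology of Delta in degree n-1 vanishes (every cycle is a boundary).\<close>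
definition homology_vanishes :: "'k::field itself \<Rightarrow> 'v::linorder set set \<Rightarrow> nat \<Rightarrow> bool" where
  "homology_vanishes K \<Delta> n \<longleftrightarrow> (\<forall>z::'v set \<Rightarrow> 'k. rel_cycle K \<Delta> {} n z \<longrightarrow> rel_boundary K \<Delta> {} n z)"

text \<open>The canonical map H_{n-1}(Delta) -> H_{n-1}(Delta, Gamma) is surjective.\<close>
definition homology_map_surj :: "'k::field itself \<Rightarrow> 'v::linorder set set \<Rightarrow> 'v set set \<Rightarrow> nat \<Rightarrow> bool" where
  "homology_map_surj K \<Delta> \<Gamma> n \<longleftrightarrow>
     (\<forall>z::'v set \<Rightarrow> 'k. rel_cycle K \<Delta> \<Gamma> n z \<longrightarrow>
        (\<exists>c. rel_cycle K \<Delta> {} n c \<and> rel_boundary K \<Delta> \<Gamma> n (\<lambda>\<tau>. if \<tau> \<in> \<Gamma> then 0 else z \<tau> - c \<tau>)))"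

definition buchsbaum :: "'k::field itself \<Rightarrow> 'v::linorder set set \<Rightarrow> bool" where
  "buchsbaum K \<Delta> \<longleftrightarrow> \<Delta> \<noteq> {} \<and> pure \<Delta> \<and>
     (\<forall>F\<in>\<Delta>. F \<noteq> {} \<longrightarrow> (\<forall>n < dim_card \<Delta> - card F. homology_vanishes K (link \<Delta> F) n))"

text \<open>Buchsbaum*: for every point p of |Delta|, lying in the relative interior of a nonempty face F,
  H(|Delta|,|Delta|-p) is modelled simplicially by H(Delta, cost Delta F).\<close>
definition buchsbaum_star :: "'k::field itself \<Rightarrow> 'v::linorder set set \<Rightarrow> bool" where
  "buchsbaum_star K \<Delta> \<longleftrightarrow> buchsbaum K \<Delta> \<and>
     (\<forall>F\<in>\<Delta>. F \<noteq> {} \<longrightarrow> homology_map_surj K \<Delta> (cost \<Delta> F) (dim_card \<Delta>))"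

definition m_buchsbaum_star :: "'k::field itself \<Rightarrow> nat \<Rightarrow> 'v::linorder set set \<Rightarrow> bool" where
  "m_buchsbaum_star K m \<Delta> \<longleftrightarrow> buchsbaum K \<Delta> \<and>
     (\<forall>A. A \<subseteq> vertices \<Delta> \<and> card A < m \<longrightarrow>
        buchsbaum_star K (delete_vertices \<Delta> A) \<and> dim_card (delete_vertices \<Delta> A) = dim_card \<Delta>)"

definition balanced :: "'v set set \<Rightarrow> nat \<Rightarrow> ('v \<Rightarrow> nat) \<Rightarrow> bool" where
  "balanced \<Delta> d \<kappa> \<longleftrightarrow> (\<forall>v\<in>vertices \<Delta>. \<kappa> v \<in> {1..d}) \<and>
     (\<forall>u v. {u, v} \<in> \<Delta> \<and> u \<noteq> v \<longrightarrow> \<kappa> u \<noteq> \<kappa> v)"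

definition rank_selected :: "'v set set \<Rightarrow> ('v \<Rightarrow> nat) \<Rightarrow> nat set \<Rightarrow> 'v set set" where
  "rank_selected \<Delta> \<kappa> S = {\<tau>\<in>\<Delta>. \<kappa> ` \<tau> \<subseteq> S}"

end

theory Submission
  imports Defs
begin

definition bsum :: "'v::linorder set \<Rightarrow> ('v set \<Rightarrow> 'k::field) \<Rightarrow> 'v set \<Rightarrow> 'k" where
  "bsum V c \<tau> = (\<Sum>v\<in>V - \<tau>. bd_sign (insert v \<tau>) v * c (insert v \<tau>))"

lemma boundary_bsum:
  assumes "finite V" "\<Union>\<Gamma> \<subseteq> V" "\<And>\<sigma>. c \<sigma> \<noteq> 0 \<Longrightarrow> \<sigma> \<in> \<Gamma>"
  shows "boundary \<Gamma> c \<tau> = bsum V c \<tau>"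
  unfolding boundary_def bsum_def
proof (rule sum.mono_neutral_cong_left)
  show "finite (V - \<tau>)" using assms(1) by simp
  show "{v. v \<notin> \<tau> \<and> insert v \<tau> \<in> \<Gamma>} \<subseteq> V - \<tau>" using assms(2) by blast
  show "\<forall>i\<in>V - \<tau> - {v. v \<notin> \<tau> \<and> insert v \<tau> \<in> \<Gamma>}. bd_sign (insert i \<tau>) i * c (insert i \<tau>) = 0"
    using assms(3) by auto
qed auto

lemma card_lt_insert:
  assumes "finite \<rho>" "w \<notin> \<rho>"
  shows "card {u\<in>insert w \<rho>. u < v} = card {u\<in>\<rho>. u < v} + (if w < v then 1 else 0)"
proof (cases "w < v")
  case True
  then have "{u\<in>insert w \<rho>. u < v} = insert w {u\<in>\<rho>. u < v}" by auto
  then show ?thesis using assms True by simp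
next
  case False
  then have "{u\<in>insert w \<rho>. u < v} = {u\<in>\<rho>. u < v}" by auto
  then show ?thesis using False by simp
qed

lemma card_lt_self: "{u\<in>insert v X. u < v} = {u\<in>X. u < (v::'v::linorder)}" by auto

lemma sign_swap:
  assumes "finite \<rho>" "v \<notin> \<rho>" "w \<notin> \<rho>" "v \<noteq> w"
  shows "(bd_sign (insert w \<rho>) w * bd_sign (insert v (insert w \<rho>)) v :: 'k::field)
       = - (bd_sign (insert v \<rho>) v * bd_sign (insert w (insert v \<rho>)) w)"
proof -
  have a: "card {u\<in>insert v (insert w \<rho>). u < v} = card {u\<in>\<rho>. u < v} + (if w < v then 1 else 0)"
    using card_lt_insert[OF assms(1,3)] card_lt_self by metis
  have b: "card {u\<in>insert w (insert v \<rho>). u < w} = card {u\<in>\<rho>. u < w} + (if v < w then 1 else 0)"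
    using card_lt_insert[OF assms(1,2)] card_lt_self by metis
  have c: "card {u\<in>insert w \<rho>. u < w} = card {u\<in>\<rho>. u < w}" using card_lt_self by metis
  have d: "card {u\<in>insert v \<rho>. u < v} = card {u\<in>\<rho>. u < v}" using card_lt_self by metis
  show ?thesis unfolding bd_sign_def a b c d
    using assms(4) by (cases "w < v") (auto simp: power_add dest: not_less_iff_gr_or_eq[THEN iffD1])
qed

lemma neg1_sq: "((-1::'k::field) ^ k) * (-1) ^ k = 1"
  by (simp add: power_add[symmetric] flip: mult_2)

definition cone_sl :: "('v::linorder set \<Rightarrow> 'k::field) \<Rightarrow> 'v \<Rightarrow> 'v set \<Rightarrow> 'k" where
  "cone_sl X v \<rho> = (if v \<notin> \<rho> then bd_sign (insert v \<rho>) v * X (insert v \<rho>) else 0)"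

lemma bsum_cone_sl:
  fixes X :: "'v::linorder set \<Rightarrow> 'k::field"
  assumes "finite V" "finite \<rho>"
  shows "bsum V (cone_sl X v) \<rho> = (if v \<in> \<rho> then 0 else - (bd_sign (insert v \<rho>) v * bsum V X (insert v \<rho>)))"
proof (cases "v \<in> \<rho>")
  case True
  then show ?thesis unfolding bsum_def cone_sl_def by simp
next
  case False
  have "bsum V (cone_sl X v) \<rho> = (\<Sum>w\<in>V - insert v \<rho>. bd_sign (insert w \<rho>) w * cone_sl X v (insert w \<rho>))"
    unfolding bsum_def
    by (rule sum.mono_neutral_cong_right) (use assms in \<open>auto simp: cone_sl_def\<close>)
  also have "\<dots> = (\<Sum>w\<in>V - insert v \<rho>. - (bd_sign (insert v \<rho>) v * (bd_sign (insert w (insert v \<rho>)) w * X (insert w (insert v \<rho>)))))"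
  proof (rule sum.cong)
    fix w assume w: "w \<in> V - insert v \<rho>"
    then have "v \<notin> insert w \<rho>" using False by auto
    then have "cone_sl X v (insert w \<rho>) = bd_sign (insert v (insert w \<rho>)) v * X (insert v (insert w \<rho>))"
      unfolding cone_sl_def by simp
    moreover have "insert v (insert w \<rho>) = insert w (insert v \<rho>)" by auto
    moreover have "bd_sign (insert w \<rho>) w * bd_sign (insert v (insert w \<rho>)) v
       = - (bd_sign (insert v \<rho>) v * bd_sign (insert w (insert v \<rho>)) w :: 'k)"
      using sign_swap[OF assms(2) False, of w] w by auto
    ultimately show "bd_sign (insert w \<rho>) w * cone_sl X v (insert w \<rho>) =
         - (bd_sign (insert v \<rho>) v * (bd_sign (insert w (insert v \<rho>)) w * X (insert w (insert v \<rho>))))"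
      by (metis (no_types, lifting) mult.assoc mult_minus_left)
  qed simp
  also have "\<dots> = - (bd_sign (insert v \<rho>) v * bsum V X (insert v \<rho>))"
    unfolding bsum_def by (simp add: sum_distrib_left sum_negf)
  finally show ?thesis using False by simp
qed

lemma sc_finite_faces:
  assumes "simplicial_complex \<Delta>" "\<sigma> \<in> \<Delta>" shows "finite \<sigma>"
proof (rule ccontr)
  assume "\<not> finite \<sigma>"
  have "Pow \<sigma> \<subseteq> \<Delta>" using assms unfolding simplicial_complex_def by blast
  then have "finite (Pow \<sigma>)" using assms(1) finite_subset unfolding simplicial_complex_def by blast
  then show False using \<open>\<not> finite \<sigma>\<close> by simp
qed

lemma sc_finite_vertices:
  assumes "simplicial_complex \<Delta>" shows "finite (\<Union>\<Delta>)"
  using assms sc_finite_faces unfolding simplicial_complex_def by blast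

lemma hv_empty: "homology_vanishes K {} n"
  unfolding homology_vanishes_def rel_cycle_def rel_boundary_def chain_on_def boundary_def
  by (rule allI, rule impI, rule exI[of _ "\<lambda>_. 0"]) auto

lemma bsum_add: "bsum V (\<lambda>\<sigma>. f \<sigma> + g \<sigma>) \<tau> = bsum V f \<tau> + bsum V g \<tau>"
  unfolding bsum_def by (simp add: distrib_left sum.distrib)

lemma bsum_sum: "bsum V (\<lambda>\<sigma>. \<Sum>v\<in>A. e v \<sigma>) \<tau> = (\<Sum>v\<in>A. bsum V (e v) \<tau>)"
  unfolding bsum_def by (simp add: sum_distrib_left sum.swap[of _ A])

lemma sum_nonzero_ex: "(\<Sum>v\<in>A. f v) \<noteq> (0::'a::comm_monoid_add) \<Longrightarrow> \<exists>v\<in>A. f v \<noteq> 0"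
  by (metis sum.neutral)

lemma L1:
  fixes K :: "'k::field itself" and \<Gamma> :: "'v::linorder set set" and \<kappa> :: "'v \<Rightarrow> nat"
  assumes finV: "finite V" and UV: "\<Union>\<Gamma> \<subseteq> V" and cl: "\<forall>\<sigma>\<in>\<Gamma>. \<forall>\<tau>. \<tau> \<subseteq> \<sigma> \<longrightarrow> \<tau>\<in>\<Gamma>"
    and one: "\<forall>\<sigma>\<in>\<Gamma>. \<forall>u\<in>\<sigma>. \<forall>w\<in>\<sigma>. \<kappa> u = i \<longrightarrow> \<kappa> w = i \<longrightarrow> u = w"
    and hv: "homology_vanishes K \<Gamma> n"
    and hvl: "\<forall>v\<in>V. \<kappa> v = i \<longrightarrow> homology_vanishes K (link \<Gamma> {v}) n"
  shows "homology_vanishes K {\<sigma>\<in>\<Gamma>. \<forall>u\<in>\<sigma>. \<kappa> u \<noteq> i} n"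
  unfolding homology_vanishes_def
proof (intro allI impI)
  define \<Gamma>' where "\<Gamma>' = {\<sigma>\<in>\<Gamma>. \<forall>u\<in>\<sigma>. \<kappa> u \<noteq> i}"
  define Vi where "Vi = {v\<in>V. \<kappa> v = i}"
  have finVi: "finite Vi" using finV unfolding Vi_def by simp
  have one': "u = w" if "\<sigma> \<in> \<Gamma>" "u \<in> \<sigma>" "w \<in> \<sigma>" "\<kappa> u = i" "\<kappa> w = i" for \<sigma> u w
    using one that by blast
  have ff: "finite \<sigma>" if "\<sigma> \<in> \<Gamma>" for \<sigma>
  proof -
    have "\<sigma> \<subseteq> V" using that UV by blast
    then show ?thesis using finV by (rule finite_subset)
  qed
  fix z :: "'v set \<Rightarrow> 'k"
  assume "rel_cycle K \<Gamma>' {} n z"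
  then have zc: "\<And>\<sigma>. z \<sigma> \<noteq> 0 \<Longrightarrow> \<sigma> \<in> \<Gamma>' \<and> card \<sigma> = n" and zb: "\<And>\<tau>. boundary \<Gamma>' z \<tau> = 0"
    unfolding rel_cycle_def chain_on_def by auto
  have UV': "\<Union>\<Gamma>' \<subseteq> V" using UV unfolding \<Gamma>'_def by auto
  have "rel_cycle K \<Gamma> {} n z"
    unfolding rel_cycle_def chain_on_def
  proof (rule conjI; intro allI impI)
    fix \<sigma> assume "z \<sigma> \<noteq> 0" then show "\<sigma> \<in> \<Gamma> - {} \<and> card \<sigma> = n" using zc unfolding \<Gamma>'_def by auto
  next
    fix \<tau> :: "'v set" assume "\<tau> \<notin> {}"
    have "boundary \<Gamma> z \<tau> = bsum V z \<tau>" by (rule boundary_bsum[OF finV UV]) (use zc \<Gamma>'_def in auto)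
    also have "\<dots> = boundary \<Gamma>' z \<tau>" by (rule boundary_bsum[OF finV UV', symmetric]) (use zc in auto)
    finally show "boundary \<Gamma> z \<tau> = 0" using zb by simp
  qed
  with hv obtain b where bc0: "chain_on \<Gamma> (Suc n) b" and bz0: "\<forall>\<tau>. z \<tau> = boundary \<Gamma> b \<tau>"
    unfolding homology_vanishes_def rel_boundary_def by auto
  have bc: "\<And>\<sigma>. b \<sigma> \<noteq> 0 \<Longrightarrow> \<sigma> \<in> \<Gamma> \<and> card \<sigma> = Suc n" using bc0 unfolding chain_on_def by auto
  have bz: "z \<tau> = bsum V b \<tau>" for \<tau>
  proof -
    have "boundary \<Gamma> b \<tau> = bsum V b \<tau>" by (rule boundary_bsum[OF finV UV]) (use bc in blast)
    then show ?thesis using bz0 by simp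
  qed
  have ULv: "\<Union>(link \<Gamma> {v}) \<subseteq> V" for v using UV unfolding link_def by auto
  have "\<forall>v\<in>Vi. \<exists>e. chain_on (link \<Gamma> {v}) (Suc n) e \<and> (\<forall>\<tau>. cone_sl b v \<tau> = boundary (link \<Gamma> {v}) e \<tau>)"
  proof
    fix v assume v: "v \<in> Vi"
    have csup: "\<rho> \<in> link \<Gamma> {v} \<and> card \<rho> = n" if "cone_sl b v \<rho> \<noteq> 0" for \<rho>
    proof -
      have "v \<notin> \<rho>" "b (insert v \<rho>) \<noteq> 0" using that unfolding cone_sl_def by (auto split: if_splits)
      then have "insert v \<rho> \<in> \<Gamma>" "card (insert v \<rho>) = Suc n" using bc by auto
      moreover have "finite \<rho>" using ff[OF \<open>insert v \<rho> \<in> \<Gamma>\<close>] by simp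
      moreover have "\<rho> \<in> \<Gamma>" using cl \<open>insert v \<rho> \<in> \<Gamma>\<close> by (meson subset_insertI)
      ultimately show ?thesis using \<open>v \<notin> \<rho>\<close> unfolding link_def by simp
    qed
    have "rel_cycle K (link \<Gamma> {v}) {} n (cone_sl b v)"
      unfolding rel_cycle_def chain_on_def
    proof (rule conjI; intro allI impI)
      fix \<sigma> assume "cone_sl b v \<sigma> \<noteq> 0" then show "\<sigma> \<in> link \<Gamma> {v} - {} \<and> card \<sigma> = n" using csup by auto
    next
      fix \<rho> :: "'v set" assume "\<rho> \<notin> {}"
      show "boundary (link \<Gamma> {v}) (cone_sl b v) \<rho> = 0"
      proof (cases "finite \<rho>")
        case False
        have "insert w \<rho> \<notin> link \<Gamma> {v}" for w
        proof
          assume "insert w \<rho> \<in> link \<Gamma> {v}"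
          then have "insert w \<rho> \<in> \<Gamma>" by (simp add: link_def)
          from ff[OF this] False show False by simp
        qed
        then have emp: "{w. w \<notin> \<rho> \<and> insert w \<rho> \<in> link \<Gamma> {v}} = {}" by blast
        show ?thesis unfolding boundary_def emp by simp
      next
        case True
        have "boundary (link \<Gamma> {v}) (cone_sl b v) \<rho> = bsum V (cone_sl b v) \<rho>"
          by (rule boundary_bsum[OF finV ULv]) (use csup in auto)
        also have "\<dots> = (if v \<in> \<rho> then 0 else - (bd_sign (insert v \<rho>) v * bsum V b (insert v \<rho>)))"
          by (rule bsum_cone_sl[OF finV True])
        also have "\<dots> = 0"
        proof -
          have "z (insert v \<rho>) = 0"
          proof (rule ccontr)
            assume "z (insert v \<rho>) \<noteq> 0"
            then have "insert v \<rho> \<in> \<Gamma>'" using zc by blast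
            then show False using v unfolding \<Gamma>'_def Vi_def by simp
          qed
          then show ?thesis using bz by simp
        qed
        finally show ?thesis .
      qed
    qed
    moreover have "homology_vanishes K (link \<Gamma> {v}) n" using hvl v unfolding Vi_def by blast
    ultimately have "rel_boundary K (link \<Gamma> {v}) {} n (cone_sl b v)"
      unfolding homology_vanishes_def by blast
    then show "\<exists>e. chain_on (link \<Gamma> {v}) (Suc n) e \<and> (\<forall>\<tau>. cone_sl b v \<tau> = boundary (link \<Gamma> {v}) e \<tau>)"
      unfolding rel_boundary_def by simp
  qed
  from bchoice[OF this] obtain e where e0: "\<forall>v\<in>Vi. chain_on (link \<Gamma> {v}) (Suc n) (e v) \<and> (\<forall>\<tau>. cone_sl b v \<tau> = boundary (link \<Gamma> {v}) (e v) \<tau>)"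
    by blast
  have e: "chain_on (link \<Gamma> {v}) (Suc n) (e v) \<and> (\<forall>\<tau>. cone_sl b v \<tau> = boundary (link \<Gamma> {v}) (e v) \<tau>)" if "v \<in> Vi" for v
    using e0 that by blast
  have esup: "\<sigma> \<in> link \<Gamma> {v} \<and> card \<sigma> = Suc n" if "v \<in> Vi" "e v \<sigma> \<noteq> 0" for v \<sigma>
    using e[OF that(1)] that(2) unfolding chain_on_def by auto
  have ebs: "cone_sl b v \<tau> = bsum V (e v) \<tau>" if "v \<in> Vi" for v \<tau>
  proof -
    have "boundary (link \<Gamma> {v}) (e v) \<tau> = bsum V (e v) \<tau>"
      by (rule boundary_bsum[OF finV ULv]) (use esup[OF that] in blast)
    then show ?thesis using e[OF that] by simp
  qed
  define bm where "bm \<sigma> = (if \<forall>u\<in>\<sigma>. \<kappa> u \<noteq> i then b \<sigma> else 0)" for \<sigma>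
  define b' where "b' \<sigma> = bm \<sigma> + (\<Sum>v\<in>Vi. e v \<sigma>)" for \<sigma>
  have b'sup: "\<sigma> \<in> \<Gamma>' \<and> card \<sigma> = Suc n" if "b' \<sigma> \<noteq> 0" for \<sigma>
  proof (cases "bm \<sigma> \<noteq> 0")
    case True
    then show ?thesis using bc unfolding bm_def \<Gamma>'_def by (auto split: if_splits)
  next
    case False
    then have "(\<Sum>v\<in>Vi. e v \<sigma>) \<noteq> 0" using that unfolding b'_def by simp
    then obtain v where v: "v \<in> Vi" "e v \<sigma> \<noteq> 0" using sum_nonzero_ex by blast
    then have "\<sigma> \<in> link \<Gamma> {v}" "card \<sigma> = Suc n" using esup by auto
    then have "\<sigma> \<in> \<Gamma>" "v \<notin> \<sigma>" "insert v \<sigma> \<in> \<Gamma>" unfolding link_def by auto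
    moreover have "\<forall>u\<in>\<sigma>. \<kappa> u \<noteq> i"
    proof
      fix u assume "u \<in> \<sigma>"
      show "\<kappa> u \<noteq> i"
      proof
        assume "\<kappa> u = i"
        moreover have "\<kappa> v = i" using v(1) unfolding Vi_def by simp
        ultimately have "u = v" using one'[OF \<open>insert v \<sigma> \<in> \<Gamma>\<close>, of u v] \<open>u \<in> \<sigma>\<close> by simp
        then show False using \<open>u \<in> \<sigma>\<close> \<open>v \<notin> \<sigma>\<close> by simp
      qed
    qed
    ultimately show ?thesis using \<open>card \<sigma> = Suc n\<close> unfolding \<Gamma>'_def by auto
  qed
  show "rel_boundary K \<Gamma>' {} n z"
    unfolding rel_boundary_def
  proof (intro exI[of _ b'] conjI allI impI)
    show "chain_on (\<Gamma>' - {}) (Suc n) b'" unfolding chain_on_def using b'sup by auto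
  next
    fix \<tau> :: "'v set" assume "\<tau> \<notin> {}"
    have "boundary \<Gamma>' b' \<tau> = bsum V b' \<tau>" by (rule boundary_bsum[OF finV UV']) (use b'sup in auto)
    also have "\<dots> = bsum V bm \<tau> + (\<Sum>v\<in>Vi. bsum V (e v) \<tau>)"
      unfolding b'_def bsum_add bsum_sum ..
    also have "\<dots> = bsum V bm \<tau> + (\<Sum>v\<in>Vi. cone_sl b v \<tau>)"
      using ebs by simp
    also have "\<dots> = z \<tau>"
    proof (cases "\<forall>u\<in>\<tau>. \<kappa> u \<noteq> i")
      case False
      then obtain u where u: "u \<in> \<tau>" "\<kappa> u = i" by auto
      have "z \<tau> = 0" using zc False unfolding \<Gamma>'_def by auto
      moreover have "bsum V bm \<tau> = 0" unfolding bsum_def bm_def using u by (auto intro!: sum.neutral)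
      moreover have "cone_sl b v \<tau> = 0" if "v \<in> Vi" for v
      proof (cases "v \<in> \<tau>")
        case False
        then have "u \<noteq> v" using u by auto
        moreover have "\<kappa> v = i" using that unfolding Vi_def by simp
        ultimately have "insert v \<tau> \<notin> \<Gamma>" using one'[of "insert v \<tau>" u v] u by auto
        then show ?thesis unfolding cone_sl_def using bc by auto
      qed (simp add: cone_sl_def)
      ultimately show ?thesis by simp
    next
      case True
      define g where "g w = bd_sign (insert w \<tau>) w * b (insert w \<tau>)" for w
      have "bsum V bm \<tau> = (\<Sum>w\<in>V - \<tau>. if \<kappa> w \<noteq> i then g w else 0)"
        unfolding bsum_def bm_def g_def using True by (intro sum.cong) auto
      moreover have "(\<Sum>v\<in>Vi. cone_sl b v \<tau>) = (\<Sum>w\<in>V - \<tau>. if \<kappa> w = i then g w else 0)"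
      proof -
        have "(\<Sum>w\<in>V - \<tau>. if \<kappa> w = i then g w else 0) = (\<Sum>w\<in>{w\<in>V - \<tau>. \<kappa> w = i}. g w)"
          by (rule sum.inter_filter[symmetric]) (use finV in simp)
        also have "{w\<in>V - \<tau>. \<kappa> w = i} = Vi" using True unfolding Vi_def by auto
        finally show ?thesis
          unfolding g_def cone_sl_def using True unfolding Vi_def by (auto intro!: sum.cong)
      qed
      moreover have "z \<tau> = (\<Sum>w\<in>V - \<tau>. g w)" using bz unfolding bsum_def g_def by simp
      moreover have "(\<Sum>w\<in>V - \<tau>. g w) = (\<Sum>w\<in>V - \<tau>. (if \<kappa> w \<noteq> i then g w else 0) + (if \<kappa> w = i then g w else 0))"
        by (rule sum.cong) auto
      ultimately show ?thesis by (simp add: sum.distrib)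
    qed
    finally show "z \<tau> = boundary \<Gamma>' b' \<tau>" by simp
  qed
qed

definition sF :: "'v::linorder set \<Rightarrow> 'v set \<Rightarrow> 'k::field" where
  "sF F \<rho> = (-1) ^ (\<Sum>a\<in>\<rho>. card {b\<in>F. b < a})"

lemma sF_insert: "finite \<rho> \<Longrightarrow> w \<notin> \<rho> \<Longrightarrow> (sF F (insert w \<rho>) :: 'k::field) = sF F \<rho> * (-1) ^ card {b\<in>F. b < w}"
  unfolding sF_def by (simp add: power_add mult.commute)

lemma sF_sq: "(sF F \<rho> :: 'k::field) * sF F \<rho> = 1"
  unfolding sF_def by (rule neg1_sq)

lemma bd_sign_union:
  assumes "finite \<rho>" "finite F" "\<rho> \<inter> F = {}" "w \<notin> \<rho>" "w \<notin> F"
  shows "(bd_sign (insert w (\<rho> \<union> F)) w :: 'k::field) = bd_sign (insert w \<rho>) w * (-1) ^ card {b\<in>F. b < w}"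
proof -
  have "{u\<in>insert w (\<rho> \<union> F). u < w} = {u\<in>\<rho>. u < w} \<union> {u\<in>F. u < w}" by auto
  moreover have "card ({u\<in>\<rho>. u < w} \<union> {u\<in>F. u < w}) = card {u\<in>\<rho>. u < w} + card {u\<in>F. u < w}"
    by (rule card_Un_disjoint) (use assms in auto)
  moreover have "{u\<in>insert w \<rho>. u < w} = {u\<in>\<rho>. u < w}" by auto
  ultimately show ?thesis unfolding bd_sign_def by (simp add: power_add)
qed

lemma transport:
  fixes K :: "'k::field itself" and \<Delta> :: "'v::linorder set set" and z :: "'v set \<Rightarrow> 'k"
  assumes finV: "finite V" and UV: "\<Union>\<Delta> \<subseteq> V" and cl: "\<forall>\<sigma>\<in>\<Delta>. \<forall>\<tau>. \<tau> \<subseteq> \<sigma> \<longrightarrow> \<tau>\<in>\<Delta>"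
    and F\<Delta>: "F \<in> \<Delta>" and le: "card F \<le> n"
    and rc: "rel_cycle K \<Delta> (cost \<Delta> F) n z"
    and hv: "homology_vanishes K (link \<Delta> F) (n - card F)"
  shows "rel_boundary K \<Delta> (cost \<Delta> F) n z"
proof -
  have ff: "finite \<sigma>" if "\<sigma> \<in> \<Delta>" for \<sigma>
  proof -
    have "\<sigma> \<subseteq> V" using that UV by blast
    then show ?thesis using finV by (rule finite_subset)
  qed
  have finF: "finite F" using ff[OF F\<Delta>] .
  have clos: "\<tau> \<in> \<Delta>" if "\<sigma> \<in> \<Delta>" "\<tau> \<subseteq> \<sigma>" for \<sigma> \<tau> using cl that by blast
  have zc: "\<sigma> \<in> \<Delta> \<and> F \<subseteq> \<sigma> \<and> card \<sigma> = n" if "z \<sigma> \<noteq> 0" for \<sigma>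
    using rc that unfolding rel_cycle_def chain_on_def cost_def by auto
  have zb: "boundary \<Delta> z \<tau> = 0" if "\<tau> \<notin> cost \<Delta> F" for \<tau>
    using rc that unfolding rel_cycle_def by auto
  have zbs: "bsum V z \<tau> = 0" if "F \<subseteq> \<tau>" for \<tau>
  proof -
    have "boundary \<Delta> z \<tau> = bsum V z \<tau>" by (rule boundary_bsum[OF finV UV]) (use zc in blast)
    moreover have "\<tau> \<notin> cost \<Delta> F" using that unfolding cost_def by auto
    ultimately show ?thesis using zb by simp
  qed
  have ULk: "\<Union>(link \<Delta> F) \<subseteq> V" using UV unfolding link_def by auto
  define \<zeta> where "\<zeta> \<rho> = (if \<rho> \<inter> F = {} then sF F \<rho> * z (\<rho> \<union> F) else 0)" for \<rho>
  have \<zeta>sup: "\<rho> \<in> link \<Delta> F \<and> card \<rho> = n - card F" if "\<zeta> \<rho> \<noteq> 0" for \<rho>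
  proof -
    have d: "\<rho> \<inter> F = {}" and nz: "z (\<rho> \<union> F) \<noteq> 0" using that unfolding \<zeta>_def by (auto split: if_splits)
    from zc[OF nz] have u: "\<rho> \<union> F \<in> \<Delta>" "card (\<rho> \<union> F) = n" by auto
    have r: "\<rho> \<in> \<Delta>" using clos[OF u(1)] by blast
    have "card (\<rho> \<union> F) = card \<rho> + card F" using ff[OF r] finF d by (simp add: card_Un_disjoint)
    then show ?thesis using u r d unfolding link_def by simp
  qed
  have "rel_cycle K (link \<Delta> F) {} (n - card F) \<zeta>"
    unfolding rel_cycle_def
  proof (rule conjI)
    show "chain_on (link \<Delta> F - {}) (n - card F) \<zeta>" unfolding chain_on_def using \<zeta>sup by auto
  next
    show "\<forall>\<tau>. \<tau> \<notin> {} \<longrightarrow> boundary (link \<Delta> F) \<zeta> \<tau> = 0"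
    proof (intro allI impI)
      fix \<rho> :: "'v set"
      have "boundary (link \<Delta> F) \<zeta> \<rho> = bsum V \<zeta> \<rho>" by (rule boundary_bsum[OF finV ULk]) (use \<zeta>sup in blast)
      also have "\<dots> = 0"
      proof (cases "\<rho> \<inter> F = {} \<and> finite \<rho>")
        case False
        have "\<zeta> (insert w \<rho>) = 0" for w
        proof (rule ccontr)
          assume "\<zeta> (insert w \<rho>) \<noteq> 0"
          then have "insert w \<rho> \<in> link \<Delta> F" using \<zeta>sup by blast
          then have "insert w \<rho> \<in> \<Delta>" "insert w \<rho> \<inter> F = {}" unfolding link_def by auto
          moreover have "finite (insert w \<rho>)" using ff[OF \<open>insert w \<rho> \<in> \<Delta>\<close>] .
          ultimately show False using False by auto
        qed
        then show ?thesis unfolding bsum_def by simp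
      next
        case True
        then have d: "\<rho> \<inter> F = {}" and fr: "finite \<rho>" by auto
        have "bsum V \<zeta> \<rho> = (\<Sum>w\<in>V - (\<rho> \<union> F). bd_sign (insert w \<rho>) w * \<zeta> (insert w \<rho>))"
          unfolding bsum_def by (rule sum.mono_neutral_cong_right) (use finV in \<open>auto simp: \<zeta>_def\<close>)
        also have "\<dots> = (\<Sum>w\<in>V - (\<rho> \<union> F). sF F \<rho> * (bd_sign (insert w (\<rho> \<union> F)) w * z (insert w (\<rho> \<union> F))))"
        proof (rule sum.cong)
          fix w assume w: "w \<in> V - (\<rho> \<union> F)"
          have e1: "\<zeta> (insert w \<rho>) = sF F (insert w \<rho>) * z (insert w (\<rho> \<union> F))"
            unfolding \<zeta>_def using d w by auto
          then show "bd_sign (insert w \<rho>) w * \<zeta> (insert w \<rho>) = sF F \<rho> * (bd_sign (insert w (\<rho> \<union> F)) w * z (insert w (\<rho> \<union> F)))"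
          proof -
            have e2: "(sF F (insert w \<rho>) :: 'k) = sF F \<rho> * (-1) ^ card {b\<in>F. b < w}"
              using sF_insert[OF fr, of w F] w by simp
            have e3: "(bd_sign (insert w (\<rho> \<union> F)) w :: 'k) = bd_sign (insert w \<rho>) w * (-1) ^ card {b\<in>F. b < w}"
              using bd_sign_union[OF fr finF d, of w] w by simp
            show ?thesis unfolding e1 e2 e3 by (simp only: ac_simps)
          qed
        qed simp
        also have "\<dots> = sF F \<rho> * bsum V z (\<rho> \<union> F)"
          unfolding bsum_def by (simp add: sum_distrib_left)
        also have "\<dots> = 0" using zbs by simp
        finally show ?thesis .
      qed
      finally show "boundary (link \<Delta> F) \<zeta> \<rho> = 0" .
    qed
  qed
  with hv obtain b' where b'c: "chain_on (link \<Delta> F) (Suc (n - card F)) b'"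
    and b'z: "\<forall>\<tau>. \<zeta> \<tau> = boundary (link \<Delta> F) b' \<tau>"
    unfolding homology_vanishes_def rel_boundary_def by auto
  have b'sup: "\<rho> \<in> link \<Delta> F \<and> card \<rho> = Suc (n - card F)" if "b' \<rho> \<noteq> 0" for \<rho>
    using b'c that unfolding chain_on_def by auto
  have b'z2: "\<zeta> \<tau> = bsum V b' \<tau>" for \<tau>
  proof -
    have "boundary (link \<Delta> F) b' \<tau> = bsum V b' \<tau>" by (rule boundary_bsum[OF finV ULk]) (use b'sup in blast)
    then show ?thesis using b'z by simp
  qed
  define bb where "bb \<sigma> = (if F \<subseteq> \<sigma> then sF F (\<sigma> - F) * b' (\<sigma> - F) else 0)" for \<sigma>
  have bbsup: "\<sigma> \<in> \<Delta> \<and> F \<subseteq> \<sigma> \<and> card \<sigma> = Suc n" if "bb \<sigma> \<noteq> 0" for \<sigma>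
  proof -
    have s: "F \<subseteq> \<sigma>" and nz: "b' (\<sigma> - F) \<noteq> 0" using that unfolding bb_def by (auto split: if_splits)
    from b'sup[OF nz] have l: "\<sigma> - F \<in> link \<Delta> F" "card (\<sigma> - F) = Suc (n - card F)" by auto
    then have "\<sigma> \<in> \<Delta>" using s unfolding link_def by (simp add: Un_absorb2)
    moreover have "card \<sigma> = card (\<sigma> - F) + card F"
      using ff[OF \<open>\<sigma> \<in> \<Delta>\<close>] s finF by (metis card_Diff_subset le_add_diff_inverse2 card_mono)
    ultimately show ?thesis using s l le by simp
  qed
  show ?thesis
    unfolding rel_boundary_def
  proof (intro exI[of _ bb] conjI allI impI)
    show "chain_on (\<Delta> - cost \<Delta> F) (Suc n) bb" unfolding chain_on_def cost_def using bbsup by auto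
  next
    fix \<tau> assume \<tau>: "\<tau> \<notin> cost \<Delta> F"
    have "boundary \<Delta> bb \<tau> = bsum V bb \<tau>" by (rule boundary_bsum[OF finV UV]) (use bbsup in blast)
    also have "\<dots> = z \<tau>"
    proof (cases "\<tau> \<in> \<Delta>")
      case False
      have "z \<tau> = 0" using zc False by blast
      moreover have "bb (insert w \<tau>) = 0" for w
      proof (rule ccontr)
        assume "bb (insert w \<tau>) \<noteq> 0"
        then have "insert w \<tau> \<in> \<Delta>" using bbsup by blast
        then show False using False clos by blast
      qed
      ultimately show ?thesis unfolding bsum_def by simp
    next
      case True
      then have Ft: "F \<subseteq> \<tau>" using \<tau> unfolding cost_def by auto
      define \<rho> where "\<rho> = \<tau> - F"
      have ft: "finite \<tau>" using ff[OF True] .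
      have fr: "finite \<rho>" and d: "\<rho> \<inter> F = {}" and t: "\<tau> = \<rho> \<union> F" using ft Ft unfolding \<rho>_def by auto
      have "\<zeta> \<rho> = sF F \<rho> * z \<tau>" unfolding \<zeta>_def using d t by simp
      then have "z \<tau> = sF F \<rho> * \<zeta> \<rho>" using sF_sq[of F \<rho>] by (metis mult.assoc mult_1_left)
      also have "\<dots> = sF F \<rho> * bsum V b' \<rho>" using b'z2 by simp
      also have "bsum V b' \<rho> = (\<Sum>w\<in>V - \<tau>. bd_sign (insert w \<rho>) w * b' (insert w \<rho>))"
        unfolding bsum_def t
      proof (rule sum.mono_neutral_cong_right)
        show "\<forall>w\<in>V - \<rho> - (V - (\<rho> \<union> F)). bd_sign (insert w \<rho>) w * b' (insert w \<rho>) = 0"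
        proof
          fix w assume w: "w \<in> V - \<rho> - (V - (\<rho> \<union> F))"
          then have "w \<in> F" by auto
          then have "insert w \<rho> \<notin> link \<Delta> F" unfolding link_def by auto
          then have "b' (insert w \<rho>) = 0" using b'sup by blast
          then show "bd_sign (insert w \<rho>) w * b' (insert w \<rho>) = 0" by simp
        qed
      qed (use finV in auto)
      also have "sF F \<rho> * (\<Sum>w\<in>V - \<tau>. bd_sign (insert w \<rho>) w * b' (insert w \<rho>)) = bsum V bb \<tau>"
        unfolding bsum_def sum_distrib_left
      proof (rule sum.cong)
        fix w assume w: "w \<in> V - \<tau>"
        then have wr: "w \<notin> \<rho>" and wF: "w \<notin> F" using t by auto
        have "insert w \<tau> - F = insert w \<rho>" using wF t d by auto
        then have "bb (insert w \<tau>) = sF F (insert w \<rho>) * b' (insert w \<rho>)"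
          unfolding bb_def using Ft by auto
        moreover have "(bd_sign (insert w \<tau>) w :: 'k) = bd_sign (insert w \<rho>) w * (-1) ^ card {b\<in>F. b < w}"
          using bd_sign_union[OF fr finF d wr wF] t by simp
        moreover have "(sF F (insert w \<rho>) :: 'k) = sF F \<rho> * (-1) ^ card {b\<in>F. b < w}"
          by (rule sF_insert[OF fr wr])
        moreover have "((-1::'k) ^ card {b\<in>F. b < w}) * (-1) ^ card {b\<in>F. b < w} = 1" by (rule neg1_sq)
        ultimately show "sF F \<rho> * (bd_sign (insert w \<rho>) w * b' (insert w \<rho>)) = bd_sign (insert w \<tau>) w * bb (insert w \<tau>)"
          by (simp add: algebra_simps)
      qed simp
      finally show ?thesis by simp
    qed
    finally show "z \<tau> = boundary \<Delta> bb \<tau>" by simp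
  qed
qed

locale core =
  fixes \<Delta> :: "'v::linorder set set" and \<kappa> :: "'v \<Rightarrow> nat" and C :: "nat set" and i :: nat
  assumes sc: "simplicial_complex \<Delta>" and finC: "finite C" and dimC: "dim_card \<Delta> = card C"
    and colC: "\<forall>v\<in>vertices \<Delta>. \<kappa> v \<in> C"
    and propc: "\<forall>u v. {u, v} \<in> \<Delta> \<and> u \<noteq> v \<longrightarrow> \<kappa> u \<noteq> \<kappa> v"
    and iC: "i \<in> C" and ne: "C - {i} \<noteq> {}" and nonempty: "\<Delta> \<noteq> {}"
begin

definition V where "V = \<Union>\<Delta>"
definition Vi where "Vi = {v\<in>V. \<kappa> v = i}"
definition D' where "D' = rank_selected \<Delta> \<kappa> (C - {i})"

lemma finV: "finite V" unfolding V_def by (rule sc_finite_vertices[OF sc])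
lemma UV: "\<Union>\<Delta> \<subseteq> V" unfolding V_def by simp
lemma cl: "\<forall>\<sigma>\<in>\<Delta>. \<forall>\<tau>. \<tau> \<subseteq> \<sigma> \<longrightarrow> \<tau>\<in>\<Delta>" using sc unfolding simplicial_complex_def by blast
lemma clos: "\<sigma> \<in> \<Delta> \<Longrightarrow> \<tau> \<subseteq> \<sigma> \<Longrightarrow> \<tau> \<in> \<Delta>" using cl by blast
lemma ff: "\<sigma> \<in> \<Delta> \<Longrightarrow> finite \<sigma>" by (rule sc_finite_faces[OF sc])
lemma finD: "finite \<Delta>" using sc unfolding simplicial_complex_def by blast
lemma empty_in: "{} \<in> \<Delta>" using nonempty clos by blast

lemma col: assumes "\<sigma> \<in> \<Delta>" "u \<in> \<sigma>" shows "\<kappa> u \<in> C"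
proof -
  have "u \<in> vertices \<Delta>" unfolding vertices_def using assms by blast
  then show ?thesis using colC by (rule bspec[rotated])
qed

lemma inj: assumes "\<sigma> \<in> \<Delta>" shows "inj_on \<kappa> \<sigma>"
proof (rule inj_onI)
  fix u w assume "u \<in> \<sigma>" "w \<in> \<sigma>" "\<kappa> u = \<kappa> w"
  show "u = w"
  proof (rule ccontr)
    assume "u \<noteq> w"
    have "{u, w} \<subseteq> \<sigma>" using \<open>u \<in> \<sigma>\<close> \<open>w \<in> \<sigma>\<close> by simp
    then have "{u, w} \<in> \<Delta>" by (rule clos[OF assms])
    then show False using propc[rule_format, of u w] \<open>u \<noteq> w\<close> \<open>\<kappa> u = \<kappa> w\<close> by simp
  qed
qed

lemma one: assumes "\<sigma> \<in> \<Delta>" "u \<in> \<sigma>" "w \<in> \<sigma>" "\<kappa> u = \<kappa> w" shows "u = w"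
  by (rule inj_onD[OF inj[OF assms(1)] assms(4) assms(2) assms(3)])

lemma card_img: "\<sigma> \<in> \<Delta> \<Longrightarrow> card (\<kappa> ` \<sigma>) = card \<sigma>"
  using inj card_image by blast

lemma card_le: assumes "\<sigma> \<in> \<Delta>" shows "card \<sigma> \<le> card C"
proof -
  have "\<kappa> ` \<sigma> \<subseteq> C" using col assms by blast
  then have "card (\<kappa> ` \<sigma>) \<le> card C" by (rule card_mono[OF finC])
  then show ?thesis using card_img[OF assms] by simp
qed

lemma full: assumes "\<sigma> \<in> \<Delta>" "card \<sigma> = card C" shows "\<kappa> ` \<sigma> = C"
proof -
  have "\<kappa> ` \<sigma> \<subseteq> C" using col assms by blast
  moreover have "card (\<kappa> ` \<sigma>) = card C" using card_img[OF assms(1)] assms(2) by simp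
  ultimately show ?thesis using card_subset_eq[OF finC] by blast
qed

lemma facet_ex: "\<exists>\<tau>\<in>\<Delta>. card \<tau> = card C"
proof -
  have "Max (card ` \<Delta>) \<in> card ` \<Delta>" using finD nonempty by (intro Max_in) auto
  then show ?thesis using dimC unfolding dim_card_def by auto
qed

lemma D'_iff: "\<sigma> \<in> D' \<longleftrightarrow> \<sigma> \<in> \<Delta> \<and> (\<forall>u\<in>\<sigma>. \<kappa> u \<noteq> i)"
proof
  assume "\<sigma> \<in> D'" then show "\<sigma> \<in> \<Delta> \<and> (\<forall>u\<in>\<sigma>. \<kappa> u \<noteq> i)"
    unfolding D'_def rank_selected_def by auto
next
  assume a: "\<sigma> \<in> \<Delta> \<and> (\<forall>u\<in>\<sigma>. \<kappa> u \<noteq> i)"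
  have "\<kappa> ` \<sigma> \<subseteq> C - {i}"
  proof
    fix x assume "x \<in> \<kappa> ` \<sigma>"
    then obtain u where "u \<in> \<sigma>" "x = \<kappa> u" by blast
    then show "x \<in> C - {i}" using a col[of \<sigma> u] by simp
  qed
  then show "\<sigma> \<in> D'" using a unfolding D'_def rank_selected_def by simp
qed

lemma cardC: "card (C - {i}) = card C - 1" using iC finC by simp

lemma D'_card_le: "\<sigma> \<in> D' \<Longrightarrow> card \<sigma> \<le> card C - 1"
proof -
  assume a: "\<sigma> \<in> D'"
  then have s: "\<sigma> \<in> \<Delta>" "\<kappa> ` \<sigma> \<subseteq> C - {i}" unfolding D'_def rank_selected_def by auto
  then have "card (\<kappa> ` \<sigma>) \<le> card (C - {i})" using card_mono[OF finite_Diff[OF finC]] by blast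
  then show ?thesis using card_img[OF s(1)] cardC by simp
qed

lemma drop_i: assumes "\<tau> \<in> \<Delta>" "card \<tau> = card C"
  obtains u where "u \<in> \<tau>" "\<kappa> u = i" "\<tau> - {u} \<in> D'" "card (\<tau> - {u}) = card C - 1"
proof -
  have "i \<in> \<kappa> ` \<tau>" using full[OF assms] iC by simp
  then obtain u where u: "u \<in> \<tau>" "\<kappa> u = i" by blast
  have "\<tau> - {u} \<in> \<Delta>" using clos[OF assms(1)] by blast
  moreover have "\<forall>x\<in>\<tau> - {u}. \<kappa> x \<noteq> i"
  proof
    fix x assume x: "x \<in> \<tau> - {u}"
    show "\<kappa> x \<noteq> i"
    proof
      assume "\<kappa> x = i"
      then have "x = u" using one[OF assms(1), of x u] x u by simp
      then show False using x by simp
    qed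
  qed
  ultimately have "\<tau> - {u} \<in> D'" using D'_iff by blast
  moreover have "card (\<tau> - {u}) = card C - 1" using assms(2) u(1) ff[OF assms(1)] by simp
  ultimately show ?thesis using that u by blast
qed

lemma dim_D': "dim_card D' = card C - 1"
proof -
  obtain \<tau> where t: "\<tau> \<in> \<Delta>" "card \<tau> = card C" using facet_ex by blast
  obtain u where "\<tau> - {u} \<in> D'" "card (\<tau> - {u}) = card C - 1" using drop_i[OF t] by blast
  moreover have "finite D'" using finD unfolding D'_def rank_selected_def by simp
  moreover have "card C - 1 \<in> card ` D'" using calculation(1,2) by (metis image_eqI)
  ultimately show ?thesis unfolding dim_card_def using D'_card_le
    by (intro Max_eqI) auto
qed

lemma pure_D': assumes pureD: "pure \<Delta>" shows "pure D'"
  unfolding pure_def dim_D'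
proof
  fix \<sigma> assume s: "\<sigma> \<in> D'"
  then have s\<Delta>: "\<sigma> \<in> \<Delta>" using D'_iff by blast
  obtain \<tau> where t: "\<tau> \<in> \<Delta>" "\<sigma> \<subseteq> \<tau>" "card \<tau> = card C" using pureD s\<Delta> dimC unfolding pure_def by metis
  obtain u where u: "u \<in> \<tau>" "\<kappa> u = i" "\<tau> - {u} \<in> D'" "card (\<tau> - {u}) = card C - 1" using drop_i[OF t(1,3)] by blast
  have "u \<notin> \<sigma>" using s u(2) D'_iff by blast
  then have "\<sigma> \<subseteq> \<tau> - {u}" using t(2) by blast
  then show "\<exists>\<tau>\<in>D'. \<sigma> \<subseteq> \<tau> \<and> card \<tau> = card C - 1" using u by blast
qed

end


context core
begin

lemma link_closed: "\<sigma> \<in> link \<Delta> F \<Longrightarrow> \<tau> \<subseteq> \<sigma> \<Longrightarrow> \<tau> \<in> link \<Delta> F"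
proof -
  assume a: "\<sigma> \<in> link \<Delta> F" "\<tau> \<subseteq> \<sigma>"
  then have "\<sigma> \<in> \<Delta>" "\<sigma> \<inter> F = {}" "\<sigma> \<union> F \<in> \<Delta>" unfolding link_def by auto
  moreover have "\<tau> \<union> F \<subseteq> \<sigma> \<union> F" using a(2) by blast
  ultimately show ?thesis using a(2) clos unfolding link_def by blast
qed

lemma link_link: assumes "v \<notin> F" shows "link (link \<Delta> F) {v} = link \<Delta> (insert v F)"
proof (rule set_eqI)
  fix \<sigma>
  show "\<sigma> \<in> link (link \<Delta> F) {v} \<longleftrightarrow> \<sigma> \<in> link \<Delta> (insert v F)"
  proof
    assume "\<sigma> \<in> link (link \<Delta> F) {v}"
    then have a: "\<sigma> \<in> \<Delta>" "v \<notin> \<sigma>" "\<sigma> \<inter> F = {}" "insert v \<sigma> \<union> F \<in> \<Delta>" unfolding link_def by auto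
    have "\<sigma> \<union> insert v F = insert v \<sigma> \<union> F" by blast
    then show "\<sigma> \<in> link \<Delta> (insert v F)" using a unfolding link_def by auto
  next
    assume "\<sigma> \<in> link \<Delta> (insert v F)"
    then have a: "\<sigma> \<in> \<Delta>" "v \<notin> \<sigma>" "\<sigma> \<inter> F = {}" "\<sigma> \<union> insert v F \<in> \<Delta>" unfolding link_def by auto
    have e: "\<sigma> \<union> insert v F = insert v \<sigma> \<union> F" by blast
    have b1: "\<sigma> \<union> F \<in> \<Delta>" by (rule clos[OF a(4)]) blast
    have b2: "insert v \<sigma> \<in> \<Delta>" by (rule clos[OF a(4)]) blast
    have "\<sigma> \<in> link \<Delta> F" using a b1 unfolding link_def by simp
    moreover have "insert v \<sigma> \<in> link \<Delta> F" using a b2 e assms unfolding link_def by auto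
    ultimately show "\<sigma> \<in> link (link \<Delta> F) {v}" using a(2) unfolding link_def by auto
  qed
qed

lemma link_empty: assumes "G \<notin> \<Delta>" shows "link \<Delta> G = {}"
proof -
  have "\<sigma> \<notin> link \<Delta> G" for \<sigma>
  proof
    assume "\<sigma> \<in> link \<Delta> G"
    then have "\<sigma> \<union> G \<in> \<Delta>" unfolding link_def by auto
    then have "G \<in> \<Delta>" by (rule clos) blast
    then show False using assms by simp
  qed
  then show ?thesis by blast
qed

lemma links_D':
  fixes K :: "'k::field itself"
  assumes bsD: "buchsbaum K \<Delta>" and F: "F \<in> D'" "F \<noteq> {}" and n: "n < card C - 1 - card F"
  shows "homology_vanishes K (link D' F) n"
proof -
  have F\<Delta>: "F \<in> \<Delta>" and Fi: "\<forall>u\<in>F. \<kappa> u \<noteq> i" using F(1) D'_iff by auto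
  have finF: "finite F" using ff[OF F\<Delta>] .
  have hvB: "homology_vanishes K (link \<Delta> G) m" if "G \<in> \<Delta>" "G \<noteq> {}" "m < card C - card G" for G m
    using bsD that dimC unfolding buchsbaum_def by auto
  have eq: "link D' F = {\<sigma>\<in>link \<Delta> F. \<forall>u\<in>\<sigma>. \<kappa> u \<noteq> i}"
    unfolding link_def D'_iff using Fi by auto
  have "homology_vanishes K {\<sigma>\<in>link \<Delta> F. \<forall>u\<in>\<sigma>. \<kappa> u \<noteq> i} n"
  proof (rule L1[OF finV])
    show "\<Union>(link \<Delta> F) \<subseteq> V" using UV unfolding link_def by auto
    show "\<forall>\<sigma>\<in>link \<Delta> F. \<forall>\<tau>. \<tau> \<subseteq> \<sigma> \<longrightarrow> \<tau> \<in> link \<Delta> F" using link_closed by blast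
    show "\<forall>\<sigma>\<in>link \<Delta> F. \<forall>u\<in>\<sigma>. \<forall>w\<in>\<sigma>. \<kappa> u = i \<longrightarrow> \<kappa> w = i \<longrightarrow> u = w"
    proof (intro ballI impI)
      fix \<sigma> u w assume "\<sigma> \<in> link \<Delta> F" "u \<in> \<sigma>" "w \<in> \<sigma>" "\<kappa> u = i" "\<kappa> w = i"
      then show "u = w" using one[of \<sigma> u w] unfolding link_def by auto
    qed
    show "homology_vanishes K (link \<Delta> F) n" using hvB[OF F\<Delta> F(2)] n by simp
    show "\<forall>v\<in>V. \<kappa> v = i \<longrightarrow> homology_vanishes K (link (link \<Delta> F) {v}) n"
    proof (intro ballI impI)
      fix v assume "v \<in> V" "\<kappa> v = i"
      then have vF: "v \<notin> F" using Fi by auto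
      show "homology_vanishes K (link (link \<Delta> F) {v}) n"
      proof (cases "insert v F \<in> \<Delta>")
        case True
        have "card (insert v F) = Suc (card F)" using finF vF by simp
        then show ?thesis unfolding link_link[OF vF] using hvB[OF True] n by simp
      next
        case False
        show ?thesis unfolding link_link[OF vF] link_empty[OF False] by (rule hv_empty)
      qed
    qed
  qed
  then show ?thesis using eq by simp
qed

end


context core
begin

lemma cardC_pos: "Suc (card C - 1) = card C"
proof -
  have "C \<noteq> {}" using iC by blast
  then have "card C > 0" using finC by (simp add: card_gt_0_iff)
  then show ?thesis by simp
qed

lemma UV': "\<Union>D' \<subseteq> V"
proof
  fix x assume "x \<in> \<Union>D'"
  then obtain \<sigma> where "\<sigma> \<in> D'" "x \<in> \<sigma>" by blast
  then have "\<sigma> \<in> \<Delta>" using D'_iff by simp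
  then show "x \<in> V" using \<open>x \<in> \<sigma>\<close> UV by blast
qed

lemma surj_D':
  fixes K :: "'k::field itself"
  assumes bs: "buchsbaum_star K \<Delta>" and F: "F \<in> D'" "F \<noteq> {}"
  shows "homology_map_surj K D' (cost D' F) (dim_card D')"
  unfolding homology_map_surj_def dim_D'
proof (intro allI impI)
  define n0 where "n0 = card C - 1"
  have sn0: "Suc n0 = card C" unfolding n0_def by (rule cardC_pos)
  have F\<Delta>: "F \<in> \<Delta>" and Fi: "\<forall>u\<in>F. \<kappa> u \<noteq> i" using F(1) D'_iff by auto
  have bsD: "buchsbaum K \<Delta>" using bs unfolding buchsbaum_star_def by simp
  have hvB: "homology_vanishes K (link \<Delta> G) m" if "G \<in> \<Delta>" "G \<noteq> {}" "m < card C - card G" for G m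
    using bsD that dimC unfolding buchsbaum_def by auto
  have hms: "homology_map_surj K \<Delta> (cost \<Delta> G) (card C)" if "G \<in> \<Delta>" "G \<noteq> {}" for G
    using bs that dimC unfolding buchsbaum_star_def by auto
  fix z :: "'v set \<Rightarrow> 'k"
  assume rc: "rel_cycle K D' (cost D' F) (card C - 1) z"
  have zc: "\<sigma> \<in> D' \<and> F \<subseteq> \<sigma> \<and> card \<sigma> = n0" if "z \<sigma> \<noteq> 0" for \<sigma>
    using rc that unfolding rel_cycle_def chain_on_def cost_def n0_def by auto
  have zb: "boundary D' z \<tau> = 0" if "\<tau> \<notin> cost D' F" for \<tau>
    using rc that unfolding rel_cycle_def by auto
  have zc\<Delta>: "\<sigma> \<in> \<Delta>" if "z \<sigma> \<noteq> 0" for \<sigma> using zc[OF that] D'_iff by blast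
  have "rel_cycle K \<Delta> (cost \<Delta> F) n0 z"
    unfolding rel_cycle_def
  proof (rule conjI)
    show "chain_on (\<Delta> - cost \<Delta> F) n0 z" unfolding chain_on_def cost_def using zc zc\<Delta> by auto
    show "\<forall>\<tau>. \<tau> \<notin> cost \<Delta> F \<longrightarrow> boundary \<Delta> z \<tau> = 0"
    proof (intro allI impI)
      fix \<tau> assume t: "\<tau> \<notin> cost \<Delta> F"
      have "boundary \<Delta> z \<tau> = bsum V z \<tau>" by (rule boundary_bsum[OF finV UV]) (use zc\<Delta> in blast)
      also have "\<dots> = boundary D' z \<tau>" by (rule boundary_bsum[OF finV UV', symmetric]) (use zc in blast)
      also have "\<dots> = 0"
      proof (rule zb)
        show "\<tau> \<notin> cost D' F" using t D'_iff unfolding cost_def by blast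
      qed
      finally show "boundary \<Delta> z \<tau> = 0" .
    qed
  qed
  moreover have "card F \<le> n0" using D'_card_le[OF F(1)] unfolding n0_def .
  moreover have "homology_vanishes K (link \<Delta> F) (n0 - card F)"
    using hvB[OF F\<Delta> F(2)] \<open>card F \<le> n0\<close> sn0 by simp
  ultimately have "rel_boundary K \<Delta> (cost \<Delta> F) n0 z"
    by (intro transport[OF finV UV cl F\<Delta>])
  then obtain b where bc: "chain_on (\<Delta> - cost \<Delta> F) (Suc n0) b"
    and bz0: "\<forall>\<tau>. \<tau> \<notin> cost \<Delta> F \<longrightarrow> z \<tau> = boundary \<Delta> b \<tau>"
    unfolding rel_boundary_def by blast
  have bsup: "\<sigma> \<in> \<Delta> \<and> F \<subseteq> \<sigma> \<and> card \<sigma> = card C" if "b \<sigma> \<noteq> 0" for \<sigma>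
    using bc that sn0 unfolding chain_on_def cost_def by auto
  have bz: "z \<tau> = bsum V b \<tau>" if "\<tau> \<notin> cost \<Delta> F" for \<tau>
  proof -
    have "boundary \<Delta> b \<tau> = bsum V b \<tau>" by (rule boundary_bsum[OF finV UV]) (use bsup in blast)
    then show ?thesis using bz0 that by simp
  qed
  have "\<forall>v\<in>Vi. \<exists>c. rel_cycle K \<Delta> {} (card C) c \<and> (\<forall>\<tau>\<in>\<Delta>. insert v F \<subseteq> \<tau> \<longrightarrow> b \<tau> = c \<tau>)"
  proof
    fix v assume v: "v \<in> Vi"
    then have ki: "\<kappa> v = i" unfolding Vi_def by simp
    show "\<exists>c. rel_cycle K \<Delta> {} (card C) c \<and> (\<forall>\<tau>\<in>\<Delta>. insert v F \<subseteq> \<tau> \<longrightarrow> b \<tau> = c \<tau>)"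
    proof (cases "insert v F \<in> \<Delta>")
      case False
      have "rel_cycle K \<Delta> {} (card C) (\<lambda>_. 0)"
        unfolding rel_cycle_def chain_on_def boundary_def by simp
      moreover have "\<forall>\<tau>\<in>\<Delta>. insert v F \<subseteq> \<tau> \<longrightarrow> b \<tau> = 0" using False clos by blast
      ultimately show ?thesis by blast
    next
      case True
      define Bv where "Bv \<sigma> = (if v \<in> \<sigma> then b \<sigma> else 0)" for \<sigma>
      have Bvsup: "\<sigma> \<in> \<Delta> \<and> insert v F \<subseteq> \<sigma> \<and> card \<sigma> = card C" if "Bv \<sigma> \<noteq> 0" for \<sigma>
        using that bsup unfolding Bv_def by (auto split: if_splits)
      have "rel_cycle K \<Delta> (cost \<Delta> (insert v F)) (card C) Bv"
        unfolding rel_cycle_def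
      proof (rule conjI)
        show "chain_on (\<Delta> - cost \<Delta> (insert v F)) (card C) Bv"
          unfolding chain_on_def cost_def using Bvsup by auto
        show "\<forall>\<tau>. \<tau> \<notin> cost \<Delta> (insert v F) \<longrightarrow> boundary \<Delta> Bv \<tau> = 0"
        proof (intro allI impI)
          fix \<tau> assume t: "\<tau> \<notin> cost \<Delta> (insert v F)"
          have "boundary \<Delta> Bv \<tau> = bsum V Bv \<tau>" by (rule boundary_bsum[OF finV UV]) (use Bvsup in blast)
          also have "\<dots> = 0"
          proof (cases "\<tau> \<in> \<Delta>")
            case False
            have "Bv (insert w \<tau>) = 0" for w
            proof (rule ccontr)
              assume "Bv (insert w \<tau>) \<noteq> 0"
              then have "insert w \<tau> \<in> \<Delta>" using Bvsup by blast
              then have "\<tau> \<in> \<Delta>" by (rule clos) blast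
              then show False using False by simp
            qed
            then show ?thesis unfolding bsum_def by simp
          next
            case True
            then have sub: "insert v F \<subseteq> \<tau>" using t unfolding cost_def by blast
            have "bsum V Bv \<tau> = bsum V b \<tau>" unfolding bsum_def Bv_def using sub by (intro sum.cong) auto
            also have "\<dots> = z \<tau>" using bz[of \<tau>] sub unfolding cost_def by auto
            also have "\<dots> = 0"
            proof (rule ccontr)
              assume "z \<tau> \<noteq> 0"
              then have "\<tau> \<in> D'" using zc by blast
              then show False using sub ki D'_iff by blast
            qed
            finally show ?thesis .
          qed
          finally show "boundary \<Delta> Bv \<tau> = 0" .
        qed
      qed
      then obtain c where cc: "rel_cycle K \<Delta> {} (card C) c"
        and cb: "rel_boundary K \<Delta> (cost \<Delta> (insert v F)) (card C) (\<lambda>\<tau>. if \<tau> \<in> cost \<Delta> (insert v F) then 0 else Bv \<tau> - c \<tau>)"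
        using hms[OF True] unfolding homology_map_surj_def by blast
      then obtain b'' where b''c: "chain_on (\<Delta> - cost \<Delta> (insert v F)) (Suc (card C)) b''"
        and b''z: "\<forall>\<tau>. \<tau> \<notin> cost \<Delta> (insert v F) \<longrightarrow> (if \<tau> \<in> cost \<Delta> (insert v F) then 0 else Bv \<tau> - c \<tau>) = boundary \<Delta> b'' \<tau>"
        unfolding rel_boundary_def by blast
      have b''0: "b'' \<sigma> = 0" for \<sigma>
      proof (rule ccontr)
        assume "b'' \<sigma> \<noteq> 0"
        then have "\<sigma> \<in> \<Delta>" "card \<sigma> = Suc (card C)" using b''c unfolding chain_on_def by auto
        then show False using card_le by fastforce
      qed
      have "\<forall>\<tau>\<in>\<Delta>. insert v F \<subseteq> \<tau> \<longrightarrow> b \<tau> = c \<tau>"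
      proof (intro ballI impI)
        fix \<tau> assume "\<tau> \<in> \<Delta>" "insert v F \<subseteq> \<tau>"
        then have "\<tau> \<notin> cost \<Delta> (insert v F)" unfolding cost_def by blast
        then have "Bv \<tau> - c \<tau> = 0" using b''z b''0 unfolding boundary_def by simp
        then show "b \<tau> = c \<tau>" using \<open>insert v F \<subseteq> \<tau>\<close> unfolding Bv_def by simp
      qed
      then show ?thesis using cc by blast
    qed
  qed
  from bchoice[OF this] obtain Cf where Cf: "\<forall>v\<in>Vi. rel_cycle K \<Delta> {} (card C) (Cf v) \<and> (\<forall>\<tau>\<in>\<Delta>. insert v F \<subseteq> \<tau> \<longrightarrow> b \<tau> = Cf v \<tau>)"
    by blast
  have Cfsup: "\<sigma> \<in> \<Delta> \<and> card \<sigma> = card C" if "v \<in> Vi" "Cf v \<sigma> \<noteq> 0" for v \<sigma>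
    using Cf that unfolding rel_cycle_def chain_on_def by auto
  have Cfb: "bsum V (Cf v) \<tau> = 0" if "v \<in> Vi" for v \<tau>
  proof -
    have "boundary \<Delta> (Cf v) \<tau> = bsum V (Cf v) \<tau>" by (rule boundary_bsum[OF finV UV]) (use Cfsup that in blast)
    moreover have "boundary \<Delta> (Cf v) \<tau> = 0" using Cf that unfolding rel_cycle_def by auto
    ultimately show ?thesis by simp
  qed
  have Cfb2: "b \<tau> = Cf v \<tau>" if "v \<in> Vi" "\<tau> \<in> \<Delta>" "insert v F \<subseteq> \<tau>" for v \<tau> using Cf that by blast
  define c where "c \<rho> = (\<Sum>v\<in>Vi. cone_sl (Cf v) v \<rho>)" for \<rho>
  have finVi: "finite Vi" using finV unfolding Vi_def by simp
  have csup: "\<rho> \<in> D' \<and> card \<rho> = n0" if nzc: "c \<rho> \<noteq> 0" for \<rho>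
  proof -
    obtain v where v: "v \<in> Vi" "cone_sl (Cf v) v \<rho> \<noteq> 0" using sum_nonzero_ex[OF nzc[unfolded c_def]] by blast
    then have vr: "v \<notin> \<rho>" and nz: "Cf v (insert v \<rho>) \<noteq> 0" unfolding cone_sl_def by (auto split: if_splits)
    from Cfsup[OF v(1) nz] have ins: "insert v \<rho> \<in> \<Delta>" "card (insert v \<rho>) = card C" by auto
    have r: "\<rho> \<in> \<Delta>" by (rule clos[OF ins(1)]) blast
    have "card \<rho> = n0" using ins(2) ff[OF r] vr sn0 by simp
    moreover have "\<forall>u\<in>\<rho>. \<kappa> u \<noteq> i"
    proof
      fix u assume u: "u \<in> \<rho>"
      show "\<kappa> u \<noteq> i"
      proof
        assume "\<kappa> u = i"
        moreover have "\<kappa> v = i" using v(1) unfolding Vi_def by simp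
        ultimately have "u = v" using one[OF ins(1), of u v] u by simp
        then show False using u vr by simp
      qed
    qed
    ultimately show ?thesis using r D'_iff by blast
  qed
  show "\<exists>c. rel_cycle K D' {} (card C - 1) c \<and>
        rel_boundary K D' (cost D' F) (card C - 1) (\<lambda>\<tau>. if \<tau> \<in> cost D' F then 0 else z \<tau> - c \<tau>)"
  proof (intro exI[of _ c] conjI)
    show "rel_cycle K D' {} (card C - 1) c"
      unfolding rel_cycle_def
    proof (rule conjI)
      show "chain_on (D' - {}) (card C - 1) c" unfolding chain_on_def using csup n0_def by auto
      show "\<forall>\<tau>. \<tau> \<notin> {} \<longrightarrow> boundary D' c \<tau> = 0"
      proof (intro allI impI)
        fix \<rho> :: "'v set"
        show "boundary D' c \<rho> = 0"
        proof (cases "finite \<rho>")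
          case False
          have "insert w \<rho> \<notin> D'" for w
          proof
            assume "insert w \<rho> \<in> D'"
            then have "insert w \<rho> \<in> \<Delta>" using D'_iff by blast
            from ff[OF this] False show False by simp
          qed
          then have emp: "{w. w \<notin> \<rho> \<and> insert w \<rho> \<in> D'} = {}" by blast
          show ?thesis unfolding boundary_def emp by simp
        next
          case True
          have "boundary D' c \<rho> = bsum V c \<rho>" by (rule boundary_bsum[OF finV UV']) (use csup in blast)
          also have "\<dots> = (\<Sum>v\<in>Vi. bsum V (cone_sl (Cf v) v) \<rho>)" unfolding c_def bsum_sum ..
          also have "\<dots> = 0"
          proof (rule sum.neutral, rule ballI)
            fix v assume "v \<in> Vi"
            show "bsum V (cone_sl (Cf v) v) \<rho> = 0"
              unfolding bsum_cone_sl[OF finV True] using Cfb[OF \<open>v \<in> Vi\<close>] by simp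
          qed
          finally show ?thesis .
        qed
      qed
    qed
  next
    show "rel_boundary K D' (cost D' F) (card C - 1) (\<lambda>\<tau>. if \<tau> \<in> cost D' F then 0 else z \<tau> - c \<tau>)"
      unfolding rel_boundary_def
    proof (intro exI[of _ "\<lambda>_. 0"] conjI allI impI)
      show "chain_on (D' - cost D' F) (Suc (card C - 1)) (\<lambda>_. 0::'k)" unfolding chain_on_def by simp
    next
      fix \<tau> assume t: "\<tau> \<notin> cost D' F"
      have "z \<tau> = c \<tau>"
      proof (cases "\<tau> \<in> D' \<and> card \<tau> = n0")
        case False
        then have "z \<tau> = 0" "c \<tau> = 0" using zc csup by blast+
        then show ?thesis by simp
      next
        case True
        then have tD: "\<tau> \<in> D'" and ct: "card \<tau> = n0" by auto
        have t\<Delta>: "\<tau> \<in> \<Delta>" and ti: "\<forall>u\<in>\<tau>. \<kappa> u \<noteq> i" using tD D'_iff by auto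
        have Ft: "F \<subseteq> \<tau>" using t tD unfolding cost_def by blast
        have nc: "\<tau> \<notin> cost \<Delta> F" using Ft unfolding cost_def by blast
        have kt: "\<kappa> ` \<tau> = C - {i}"
        proof -
          have "\<kappa> ` \<tau> \<subseteq> C - {i}" using tD unfolding D'_def rank_selected_def by auto
          moreover have "card (\<kappa> ` \<tau>) = card (C - {i})" using card_img[OF t\<Delta>] ct cardC n0_def by simp
          ultimately show ?thesis using card_subset_eq[OF finite_Diff[OF finC]] by blast
        qed
        define g where "g w = bd_sign (insert w \<tau>) w * b (insert w \<tau>)" for w
        have "z \<tau> = (\<Sum>w\<in>V - \<tau>. g w)" using bz[OF nc] unfolding bsum_def g_def by simp
        also have "\<dots> = (\<Sum>w\<in>Vi. g w)"
        proof (rule sum.mono_neutral_cong_right)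
          show "finite (V - \<tau>)" using finV by simp
          show "Vi \<subseteq> V - \<tau>" using ti unfolding Vi_def by auto
          show "\<forall>w\<in>V - \<tau> - Vi. g w = 0"
          proof
            fix w assume w: "w \<in> V - \<tau> - Vi"
            show "g w = 0"
            proof (rule ccontr)
              assume "g w \<noteq> 0"
              then have bnz: "b (insert w \<tau>) \<noteq> 0" unfolding g_def by simp
              have iw: "insert w \<tau> \<in> \<Delta>" using bsup[OF bnz] by simp
              have "\<kappa> w \<in> C" by (rule col[OF iw]) simp
              moreover have "\<kappa> w \<noteq> i" using w unfolding Vi_def by simp
              ultimately have "\<kappa> w \<in> \<kappa> ` \<tau>" unfolding kt by simp
              then obtain u where u: "u \<in> \<tau>" "\<kappa> u = \<kappa> w" by (rule imageE) simp
              have "u = w" by (rule one[OF iw]) (use u in simp_all)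
              then show False using u w by simp
            qed
          qed
        qed simp
        also have "\<dots> = c \<tau>"
          unfolding c_def
        proof (rule sum.cong)
          fix v assume v: "v \<in> Vi"
          then have vt: "v \<notin> \<tau>" using ti unfolding Vi_def by auto
          have "b (insert v \<tau>) = Cf v (insert v \<tau>)"
          proof (cases "insert v \<tau> \<in> \<Delta>")
            case True
            then show ?thesis using Cfb2[OF v True] Ft by blast
          next
            case False
            then have "b (insert v \<tau>) = 0" "Cf v (insert v \<tau>) = 0" using bsup Cfsup[OF v] by blast+
            then show ?thesis by simp
          qed
          then show "g v = cone_sl (Cf v) v \<tau>" unfolding g_def cone_sl_def using vt by simp
        qed simp
        finally show ?thesis .
      qed
      then show "(if \<tau> \<in> cost D' F then 0 else z \<tau> - c \<tau>) = boundary D' (\<lambda>_. 0) \<tau>"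
        using t unfolding boundary_def by simp
    qed
  qed
qed

end


context core
begin

lemma core_bs:
  fixes K :: "'k::field itself"
  assumes bs: "buchsbaum_star K \<Delta>"
  shows "buchsbaum_star K D' \<and> dim_card D' = card C - 1"
proof -
  have bsD: "buchsbaum K \<Delta>" using bs unfolding buchsbaum_star_def by simp
  have pureD: "pure \<Delta>" using bsD unfolding buchsbaum_def by simp
  have "{} \<in> D'" using empty_in D'_iff by simp
  then have ne': "D' \<noteq> {}" by blast
  have "buchsbaum K D'"
    unfolding buchsbaum_def
  proof (intro conjI ballI impI allI)
    show "D' \<noteq> {}" by (rule ne')
    show "pure D'" by (rule pure_D'[OF pureD])
    fix F n assume "F \<in> D'" "F \<noteq> {}" "n < dim_card D' - card F"
    then show "homology_vanishes K (link D' F) n"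
      using links_D'[OF bsD] dim_D' by simp
  qed
  moreover have "\<forall>F\<in>D'. F \<noteq> {} \<longrightarrow> homology_map_surj K D' (cost D' F) (dim_card D')"
    using surj_D'[OF bs] by blast
  ultimately show ?thesis unfolding buchsbaum_star_def using dim_D' by simp
qed

end

lemma core_apply:
  fixes K :: "'k::field itself" and \<Delta> :: "'v::linorder set set"
  assumes "simplicial_complex \<Delta>" "finite C" "dim_card \<Delta> = card C"
    "\<forall>v\<in>vertices \<Delta>. \<kappa> v \<in> C" "\<forall>u v. {u, v} \<in> \<Delta> \<and> u \<noteq> v \<longrightarrow> \<kappa> u \<noteq> \<kappa> v"
    "i \<in> C" "C - {i} \<noteq> {}" and bs: "buchsbaum_star K \<Delta>"
  shows "buchsbaum_star K (rank_selected \<Delta> \<kappa> (C - {i})) \<and> dim_card (rank_selected \<Delta> \<kappa> (C - {i})) = card C - 1"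
proof -
  have "\<Delta> \<noteq> {}" using bs unfolding buchsbaum_star_def buchsbaum_def by simp
  then interpret core \<Delta> \<kappa> C i by (unfold_locales) (use assms in simp_all)
  show ?thesis using core_bs[OF bs] unfolding D'_def .
qed

lemma sc_rank: "simplicial_complex \<Delta> \<Longrightarrow> simplicial_complex (rank_selected \<Delta> \<kappa> T)"
  unfolding simplicial_complex_def rank_selected_def by (auto simp: image_subset_iff)

lemma sc_delete: "simplicial_complex \<Delta> \<Longrightarrow> simplicial_complex (delete_vertices \<Delta> A)"
  unfolding simplicial_complex_def delete_vertices_def by auto

lemma vert_rank: "v \<in> vertices (rank_selected \<Delta> \<kappa> T) \<Longrightarrow> \<kappa> v \<in> T"
  unfolding vertices_def rank_selected_def by auto

lemma step:
  fixes K :: "'k::field itself" and \<Delta> :: "'v::linorder set set"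
  assumes sc: "simplicial_complex \<Delta>" and finC: "finite C" and dimC: "dim_card \<Delta> = card C"
    and colC: "\<forall>v\<in>vertices \<Delta>. \<kappa> v \<in> C" and pc: "\<forall>u v. {u, v} \<in> \<Delta> \<and> u \<noteq> v \<longrightarrow> \<kappa> u \<noteq> \<kappa> v"
    and iC: "i \<in> C" and ne: "C - {i} \<noteq> {}" and m: "0 < m" and mb: "m_buchsbaum_star K m \<Delta>"
  shows "m_buchsbaum_star K m (rank_selected \<Delta> \<kappa> (C - {i})) \<and> dim_card (rank_selected \<Delta> \<kappa> (C - {i})) = card C - 1"
proof -
  have bsA: "buchsbaum_star K (delete_vertices \<Delta> A) \<and> dim_card (delete_vertices \<Delta> A) = dim_card \<Delta>"
    if "A \<subseteq> vertices \<Delta>" "card A < m" for A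
    using mb that unfolding m_buchsbaum_star_def by blast
  have "delete_vertices \<Delta> {} = \<Delta>" unfolding delete_vertices_def by simp
  then have bs: "buchsbaum_star K \<Delta>" using bsA[of "{}"] m by simp
  have main: "buchsbaum_star K (rank_selected \<Delta> \<kappa> (C - {i})) \<and> dim_card (rank_selected \<Delta> \<kappa> (C - {i})) = card C - 1"
    by (rule core_apply[OF sc finC dimC colC pc iC ne bs])
  have "\<forall>A. A \<subseteq> vertices (rank_selected \<Delta> \<kappa> (C - {i})) \<and> card A < m \<longrightarrow>
        buchsbaum_star K (delete_vertices (rank_selected \<Delta> \<kappa> (C - {i})) A) \<and>
        dim_card (delete_vertices (rank_selected \<Delta> \<kappa> (C - {i})) A) = dim_card (rank_selected \<Delta> \<kappa> (C - {i}))"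
  proof (intro allI impI)
    fix A assume a: "A \<subseteq> vertices (rank_selected \<Delta> \<kappa> (C - {i})) \<and> card A < m"
    have "vertices (rank_selected \<Delta> \<kappa> (C - {i})) \<subseteq> vertices \<Delta>"
      unfolding vertices_def rank_selected_def by auto
    then have A: "A \<subseteq> vertices \<Delta>" "card A < m" using a by auto
    have bsDA: "buchsbaum_star K (delete_vertices \<Delta> A)" and dDA: "dim_card (delete_vertices \<Delta> A) = card C"
      using bsA[OF A] dimC by auto
    have "vertices (delete_vertices \<Delta> A) \<subseteq> vertices \<Delta>" unfolding vertices_def delete_vertices_def by auto
    then have colA: "\<forall>v\<in>vertices (delete_vertices \<Delta> A). \<kappa> v \<in> C" using colC by blast
    have pcA: "\<forall>u v. {u, v} \<in> delete_vertices \<Delta> A \<and> u \<noteq> v \<longrightarrow> \<kappa> u \<noteq> \<kappa> v"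
      using pc unfolding delete_vertices_def by blast
    have r: "buchsbaum_star K (rank_selected (delete_vertices \<Delta> A) \<kappa> (C - {i})) \<and>
             dim_card (rank_selected (delete_vertices \<Delta> A) \<kappa> (C - {i})) = card C - 1"
      by (rule core_apply[OF sc_delete[OF sc] finC dDA colA pcA iC ne bsDA])
    have e: "rank_selected (delete_vertices \<Delta> A) \<kappa> (C - {i}) = delete_vertices (rank_selected \<Delta> \<kappa> (C - {i})) A"
      unfolding rank_selected_def delete_vertices_def by auto
    show "buchsbaum_star K (delete_vertices (rank_selected \<Delta> \<kappa> (C - {i})) A) \<and>
        dim_card (delete_vertices (rank_selected \<Delta> \<kappa> (C - {i})) A) = dim_card (rank_selected \<Delta> \<kappa> (C - {i}))"
      using r main unfolding e by simp
  qed
  moreover have "buchsbaum K (rank_selected \<Delta> \<kappa> (C - {i}))" using main unfolding buchsbaum_star_def by simp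
  ultimately show ?thesis using main unfolding m_buchsbaum_star_def by blast
qed

theorem mainTheorem3:
  fixes K :: "'k::field itself" and \<Delta> :: "'v::linorder set set" and \<kappa> :: "'v \<Rightarrow> nat"
    and m d :: nat and S :: "nat set"
  assumes "0 < m"
    and "simplicial_complex \<Delta>"
    and "dim_card \<Delta> = d"
    and "balanced \<Delta> d \<kappa>"
    and "m_buchsbaum_star K m \<Delta>"
    and "S \<subseteq> {1..d}" and "S \<noteq> {}" and "S \<noteq> {1..d}"
  shows "m_buchsbaum_star K m (rank_selected \<Delta> \<kappa> S)"
proof -
  note m = assms(1) and sc = assms(2) and dim = assms(3) and bal = assms(4) and mb = assms(5)
    and SS = assms(6) and Sne = assms(7)
  have col: "\<forall>v\<in>vertices \<Delta>. \<kappa> v \<in> {1..d}" and pc: "\<forall>u v. {u, v} \<in> \<Delta> \<and> u \<noteq> v \<longrightarrow> \<kappa> u \<noteq> \<kappa> v"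
    using bal unfolding balanced_def by auto
  define P where "P T \<longleftrightarrow> simplicial_complex (rank_selected \<Delta> \<kappa> T) \<and> dim_card (rank_selected \<Delta> \<kappa> T) = card T
      \<and> m_buchsbaum_star K m (rank_selected \<Delta> \<kappa> T)" for T
  have "finite R \<Longrightarrow> R \<subseteq> {1..d} - S \<Longrightarrow> P ({1..d} - R)" for R
  proof (induction R rule: finite_induct)
    case empty
    have "\<kappa> ` \<sigma> \<subseteq> {1..d}" if "\<sigma> \<in> \<Delta>" for \<sigma>
    proof
      fix x assume "x \<in> \<kappa> ` \<sigma>"
      then obtain u where u: "u \<in> \<sigma>" "x = \<kappa> u" by blast
      then have "u \<in> vertices \<Delta>" unfolding vertices_def using that by blast
      then show "x \<in> {1..d}" using col u(2) by blast
    qed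
    then have "rank_selected \<Delta> \<kappa> {1..d} = \<Delta>"
      unfolding rank_selected_def by blast
    then show ?case unfolding P_def using sc dim mb by simp
  next
    case (insert j R)
    define T where "T = {1..d} - R"
    have PT: "P T" using insert unfolding T_def by simp
    have jT: "j \<in> T" using insert unfolding T_def by auto
    have finT: "finite T" unfolding T_def by simp
    have pr: "insert j R \<subseteq> {1..d} - S" by (rule insert.prems)
    have "S \<subseteq> T - {j}" using pr SS unfolding T_def by blast
    then have ne: "T - {j} \<noteq> {}" using Sne by blast
    have eqT: "{1..d} - insert j R = T - {j}" unfolding T_def by blast
    let ?D = "rank_selected \<Delta> \<kappa> T"
    have colT: "\<forall>v\<in>vertices ?D. \<kappa> v \<in> T"
    proof
      fix v assume "v \<in> vertices ?D" then show "\<kappa> v \<in> T" by (rule vert_rank)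
    qed
    have pcT: "\<forall>u v. {u, v} \<in> ?D \<and> u \<noteq> v \<longrightarrow> \<kappa> u \<noteq> \<kappa> v"
    proof (intro allI impI)
      fix u v assume a: "{u, v} \<in> ?D \<and> u \<noteq> v"
      then have "{u, v} \<in> \<Delta> \<and> u \<noteq> v" unfolding rank_selected_def by simp
      then show "\<kappa> u \<noteq> \<kappa> v" using pc by simp
    qed
    have r: "m_buchsbaum_star K m (rank_selected ?D \<kappa> (T - {j})) \<and> dim_card (rank_selected ?D \<kappa> (T - {j})) = card T - 1"
    proof (rule step)
      show "simplicial_complex ?D" "dim_card ?D = card T" "m_buchsbaum_star K m ?D" using PT unfolding P_def by simp_all
    qed (use colT pcT jT ne m finT in simp_all)
    have e: "rank_selected ?D \<kappa> (T - {j}) = rank_selected \<Delta> \<kappa> (T - {j})"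
      unfolding rank_selected_def by auto
    have "card (T - {j}) = card T - 1" using jT finT by simp
    then show ?case unfolding eqT P_def using r e sc_rank[OF sc] by simp
  qed
  moreover have "{1..d} - ({1..d} - S) = S" using SS by auto
  moreover have "finite ({1..d} - S)" by simp
  ultimately have "P S" by (metis order_refl)
  then show ?thesis unfolding P_def by simp
qed

end
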